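(* Let $n\ge1$. Any two sequences $(a_i)_{i=1}^{3n},(b_i)_{i=1}^{3n}$ with entries in $\{1,2\}$ that have the same cyclic length vector are projective equivalent; i.e., every projective equivalence class of such sequences is determined by its cyclic length vector.
   Context: Sequences $(a_i),(b_i)$ of length $3n$ in $\{1,2\}$ are equivalent if $b_i=a_i$ for all $i$, or $b_i=3-a_i$ for all $i$, or $b_i=a_{3n+1-i}$ for all $i$, or $b_i=3-a_{3n+1-i}$ for all $i$. Define $\sigma_{3n}\cdot a=(a_2,\dots,a_{3n},a_1)$ if $n$ is even and $(a_2,\dots,a_{3n},3-a_1)$ if $n$ is odd. $a,b$ are projective equivalent if $b$ is equivalent to $\sigma_{3n}^k\cdot a$ for some $k\in\mathbb{N}$. The length vector of a sequence $a$ is the ordered list of lengths of its maximal blocks of consecutive equal entries (an ordered partition of $3n$). The cyclic length vector of the projective equivalence class of $a$ is the length vector of a projective equivalent sequence $a'$ with $a'_1\ne a'_{3n}$ if $n$ is even, or with $a'_1=a'_{3n}$ if $n$ is odd (and is $(3n)$ if no such $a'$ exists), regarded as an element of $\mathbb{Z}^m/\langle\sigma_m,\tau_m\rangle$, where $m$ is its number of entries, $\sigma_m$ acts by cyclic shift of entries and $\tau_m$ by reversal of the order of entries. The cyclic length vector of a sequence is that of its projective equivalence class. *)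

theory Defs
  imports Main
begin

text \<open>Sequences (a_1,...,a_{3n}) with entries in {1,2} are represented as lists of naturals;
  list index i corresponds to a_{i+1}.\<close>

definition compl_seq :: "nat list \<Rightarrow> nat list" where
  "compl_seq a = map (\<lambda>x. 3 - x) a"

definition seq_equiv :: "nat list \<Rightarrow> nat list \<Rightarrow> bool" where
  "seq_equiv a b \<longleftrightarrow> b = a \<or> b = compl_seq a \<or> b = rev a \<or> b = compl_seq (rev a)"

definition sigma_shift :: "nat \<Rightarrow> nat list \<Rightarrow> nat list" where
  "sigma_shift n a = (if even n then tl a @ [hd a] else tl a @ [3 - hd a])"

definition proj_equiv :: "nat \<Rightarrow> nat list \<Rightarrow> nat list \<Rightarrow> bool" where
  "proj_equiv n a b \<longleftrightarrow> (\<exists>k::nat. seq_equiv ((sigma_shift n ^^ k) a) b)"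

fun length_vector :: "'a list \<Rightarrow> nat list" where
  "length_vector [] = []"
| "length_vector [x] = [1]"
| "length_vector (x # y # xs) =
     (let r = length_vector (y # xs) in
      if x = y then Suc (hd r) # tl r else 1 # r)"

definition dihedral_orbit :: "nat list \<Rightarrow> nat list set" where
  "dihedral_orbit L = {M. \<exists>k. M = rotate k L \<or> M = rev (rotate k L)}"

definition cyc_rep :: "nat \<Rightarrow> nat list \<Rightarrow> nat list \<Rightarrow> bool" where
  "cyc_rep n a a' \<longleftrightarrow> proj_equiv n a a' \<and>
     (if even n then hd a' \<noteq> last a' else hd a' = last a')"

text \<open>The cyclic length vector, as an element of the quotient by the dihedral action,
  i.e. as a dihedral orbit of length vectors.\<close>
definition cyclic_length_vector :: "nat \<Rightarrow> nat list \<Rightarrow> nat list set" where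
  "cyclic_length_vector n a =
     (if \<exists>a'. cyc_rep n a a'
      then \<Union>{dihedral_orbit (length_vector a') | a'. cyc_rep n a a'}
      else dihedral_orbit [3 * n])"

end

theory Submission
  imports Defs
begin

fun dec :: "nat \<Rightarrow> nat list \<Rightarrow> nat list" where
  "dec v [] = []"
| "dec v (m # L) = replicate m v @ dec (3 - v) L"

lemma lv_nonempty: "x \<noteq> [] \<Longrightarrow> length_vector x \<noteq> []"
  by (induction x rule: length_vector.induct) (auto simp: Let_def)

lemma lv_pos: "0 \<notin> set (length_vector x)"
proof (induction x rule: length_vector.induct)
  case (3 x y xs)
  have "length_vector (y # xs) \<noteq> []" by (rule lv_nonempty) simp
  then show ?case using 3 by (cases "length_vector (y # xs)") (auto simp: Let_def)
qed auto

lemma dec_lv: "set x \<subseteq> {1,2} \<Longrightarrow> x \<noteq> [] \<Longrightarrow> dec (hd x) (length_vector x) = x"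
proof (induction x rule: length_vector.induct)
  case (3 x y xs)
  define r where "r = length_vector (y # xs)"
  have rne: "r \<noteq> []" unfolding r_def by (rule lv_nonempty) simp
  have IH: "dec y r = y # xs" using 3 unfolding r_def by auto
  show ?case
  proof (cases "x = y")
    case True
    obtain p q where r: "r = p # q" using rne by (cases r) auto
    have "length_vector (x # y # xs) = Suc p # q" using True r unfolding r_def by (simp add: Let_def)
    then show ?thesis using True IH r by simp
  next
    case False
    with 3(2) have "3 - x = y" by auto
    have "length_vector (x # y # xs) = 1 # r" using False unfolding r_def by (simp add: Let_def)
    then show ?thesis using \<open>3 - x = y\<close> IH by simp
  qed
qed auto

lemma dec_compl: "v \<le> 3 \<Longrightarrow> dec (3 - v) L = compl_seq (dec v L)"
proof (induction L arbitrary: v)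
  case (Cons m L)
  have e: "3 - (3 - v) = v" using Cons.prems by simp
  have "dec (3 - (3 - v)) L = compl_seq (dec (3 - v) L)" using Cons.IH by simp
  then show ?case using e by (simp add: compl_seq_def)
qed (simp add: compl_seq_def)

lemma lv_rep_app: "y = [] \<or> hd y \<noteq> u \<Longrightarrow> length_vector (replicate (Suc j) u @ y) = Suc j # length_vector y"
proof (induction j)
  case 0
  then show ?case by (cases y) auto
next
  case (Suc j)
  then show ?case by (simp add: Let_def)
qed

lemma dec_ne: "L \<noteq> [] \<Longrightarrow> 0 \<notin> set L \<Longrightarrow> dec v L \<noteq> [] \<and> hd (dec v L) = v"
  by (cases L) (auto simp: hd_append)

lemma lv_dec: "0 \<notin> set L \<Longrightarrow> length_vector (dec v L) = L"
proof (induction L arbitrary: v)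
  case (Cons m K)
  then obtain j where m: "m = Suc j" by (cases m) auto
  have ne: "(3::nat) - v \<noteq> v" by arith
  have c: "dec (3 - v) K = [] \<or> hd (dec (3 - v) K) \<noteq> v"
    using dec_ne[of K "3 - v"] Cons ne by (cases "K = []") auto
  have "length_vector (replicate (Suc j) v @ dec (3 - v) K) = Suc j # K"
    using lv_rep_app[OF c] Cons.IH Cons.prems by simp
  then show ?case using m by simp
qed simp

lemma dec_app: "v \<le> 3 \<Longrightarrow> dec v (K @ M) = dec v K @ dec (if even (length K) then v else 3 - v) M"
  by (induction K arbitrary: v) auto

lemma dec_last: "0 \<notin> set L \<Longrightarrow> L \<noteq> [] \<Longrightarrow> v \<le> 3 \<Longrightarrow>
   last (dec v L) = (if odd (length L) then v else 3 - v)"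
proof (induction L arbitrary: v)
  case (Cons m K)
  show ?case
  proof (cases "K = []")
    case True
    then show ?thesis using Cons by simp
  next
    case False
    then have "dec (3 - v) K \<noteq> []" using dec_ne Cons by simp
    then show ?thesis using Cons False by auto
  qed
qed simp

lemma dec_rev: "0 \<notin> set L \<Longrightarrow> v \<le> 3 \<Longrightarrow>
   rev (dec v L) = dec (if odd (length L) then v else 3 - v) (rev L)"
proof (induction L arbitrary: v)
  case (Cons m K)
  then show ?case by (auto simp: dec_app)
qed simp

lemma hd_last_lv: "(x::nat list) \<noteq> [] \<Longrightarrow> set x \<subseteq> {1,2} \<Longrightarrow> (hd x = last x) \<longleftrightarrow> odd (length (length_vector x))"
proof -
  assume a: "x \<noteq> []" "set x \<subseteq> {1,2}"
  have "hd x \<in> set x" using a(1) by simp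
  then have h: "hd x \<in> {1,2}" using a(2) by blast
  have "last x = last (dec (hd x) (length_vector x))" using dec_lv a by simp
  also have "\<dots> = (if odd (length (length_vector x)) then hd x else 3 - hd x)"
    using dec_last[OF lv_pos lv_nonempty[OF a(1)], of "hd x"] h by auto
  finally show ?thesis using h by auto
qed

definition gm :: "nat \<Rightarrow> nat \<Rightarrow> nat" where "gm n c = (if even n then c else 3 - c)"

abbreviation S where "S n \<equiv> sigma_shift n"

lemma sigma_cons: "S n (c # xs) = xs @ [gm n c]"
  by (simp add: sigma_shift_def gm_def)

lemma sigma_pow_app: "(S n ^^ length x) (x @ y) = y @ map (gm n) x"
proof (induction x arbitrary: y)
  case (Cons c x)
  have "(S n ^^ length (c # x)) ((c # x) @ y) = (S n ^^ length x) (S n (c # (x @ y)))"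
    by (simp add: funpow_Suc_right del: funpow.simps)
  also have "\<dots> = (S n ^^ length x) (x @ (y @ [gm n c]))" by (simp add: sigma_cons)
  also have "\<dots> = y @ [gm n c] @ map (gm n) x" using Cons by simp
  finally show ?case by simp
qed simp

definition ok :: "nat list \<Rightarrow> bool" where "ok x \<longleftrightarrow> x \<noteq> [] \<and> set x \<subseteq> {1,2}"

lemma ok_S: "ok x \<Longrightarrow> ok (S n x) \<and> length (S n x) = length x"
  by (cases x) (auto simp: ok_def sigma_cons gm_def)

lemma ok_Spow: "ok x \<Longrightarrow> ok ((S n ^^ k) x) \<and> length ((S n ^^ k) x) = length x"
  by (induction k) (auto dest: ok_S)

lemma gm_inv: "c \<le> 3 \<Longrightarrow> gm n (gm n c) = c"
  by (simp add: gm_def)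

lemma ok_le3: "ok x \<Longrightarrow> c \<in> set x \<Longrightarrow> c \<le> 3"
  by (auto simp: ok_def)

lemma sigma_period: "ok x \<Longrightarrow> (S n ^^ (2 * length x)) x = x"
proof -
  assume o: "ok x"
  have e1: "(S n ^^ length x) x = map (gm n) x" using sigma_pow_app[where n=n and x=x and y="[]"] by simp
  have e2: "(S n ^^ length x) (map (gm n) x) = map (gm n) (map (gm n) x)"
    using sigma_pow_app[where n=n and x="map (gm n) x" and y="[]"] by simp
  have "(S n ^^ (length x + length x)) x = (S n ^^ length x) ((S n ^^ length x) x)"
    by (simp add: funpow_add)
  also have "\<dots> = map (gm n) (map (gm n) x)" using e1 e2 by simp
  also have "\<dots> = x" using o by (auto simp: gm_inv ok_le3 intro: map_idI)
  finally show ?thesis by (simp add: mult_2)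
qed

lemma sigma_period_mult: "ok x \<Longrightarrow> (S n ^^ (2 * length x * q)) x = x"
proof (induction q)
  case (Suc q)
  have "(S n ^^ (2 * length x * Suc q)) x = (S n ^^ (2 * length x)) ((S n ^^ (2 * length x * q)) x)"
    by (simp add: funpow_add add.commute)
  then show ?case using Suc sigma_period by simp
qed simp

lemma sigma_compl: "x \<noteq> [] \<Longrightarrow> S n (compl_seq x) = compl_seq (S n x)"
  by (cases x) (auto simp: compl_seq_def sigma_shift_def)

lemma sigma_pow_compl: "ok x \<Longrightarrow> (S n ^^ k) (compl_seq x) = compl_seq ((S n ^^ k) x)"
proof (induction k)
  case (Suc k)
  have "(S n ^^ k) x \<noteq> []" using ok_Spow[OF Suc.prems] by (simp add: ok_def)
  then show ?case using Suc by (simp add: sigma_compl)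
qed simp

lemma sigma_rev1: "y \<noteq> [] \<Longrightarrow> hd y \<le> 3 \<Longrightarrow> S n (rev (S n y)) = rev y"
  by (cases y) (auto simp: sigma_cons gm_inv)

lemma sigma_rev: "ok x \<Longrightarrow> S n (rev x) = rev ((S n ^^ (2 * length x - 1)) x)"
proof -
  assume o: "ok x"
  define y where "y = (S n ^^ (2 * length x - 1)) x"
  have oy: "ok y" using ok_Spow[OF o] y_def by simp
  have "length x > 0" using o by (simp add: ok_def)
  then have "Suc (2 * length x - 1) = 2 * length x" by simp
  then have "S n y = x" unfolding y_def using sigma_period[OF o, of n]
    by (metis comp_apply funpow.simps(2))
  moreover have "hd y \<le> 3" using oy ok_le3[OF oy, of "hd y"] by (simp add: ok_def)
  ultimately show ?thesis using sigma_rev1[of y n] oy y_def by (auto simp: ok_def)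
qed

lemma sigma_pow_rev: "ok x \<Longrightarrow> (S n ^^ j) (rev x) = rev ((S n ^^ ((2 * length x - 1) * j)) x)"
proof (induction j)
  case (Suc j)
  define d where "d = 2 * length x - 1"
  define z where "z = (S n ^^ ((2 * length x - 1) * j)) x"
  have oz: "ok z" "length z = length x" using ok_Spow[OF Suc.prems] z_def by auto
  have "(S n ^^ Suc j) (rev x) = S n (rev z)" using Suc z_def by simp
  also have "\<dots> = rev ((S n ^^ (2 * length x - 1)) z)" using sigma_rev[OF oz(1)] oz(2) by simp
  also have "\<dots> = rev ((S n ^^ ((2 * length x - 1) * Suc j)) x)"
  proof -
    have "(S n ^^ d) ((S n ^^ (d * j)) x) = (S n ^^ (d + d * j)) x" by (simp add: funpow_add)
    then show ?thesis unfolding z_def d_def[symmetric] by simp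
  qed
  finally show ?case .
qed simp

definition ops :: "(nat list \<Rightarrow> nat list) set" where
  "ops = {id, compl_seq, rev, compl_seq \<circ> rev}"

lemma seq_equiv_ops: "seq_equiv x y \<longleftrightarrow> (\<exists>T\<in>ops. y = T x)"
  unfolding seq_equiv_def ops_def by auto

lemma cc: "set z \<subseteq> {1,2} \<Longrightarrow> compl_seq (compl_seq z) = z"
  unfolding compl_seq_def by (induction z) auto

lemma rev_compl: "rev (compl_seq z) = compl_seq (rev z)"
  unfolding compl_seq_def by (simp add: rev_map)

lemma ok_compl: "ok x \<Longrightarrow> ok (compl_seq x)"
  unfolding ok_def compl_seq_def by auto

lemma ok_rev: "ok x \<Longrightarrow> ok (rev x)"
  unfolding ok_def by auto

lemma ok_ops: "T \<in> ops \<Longrightarrow> ok x \<Longrightarrow> ok (T x) \<and> length (T x) = length x"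
  unfolding ops_def by (auto simp: ok_compl ok_rev) (auto simp: compl_seq_def)

lemma ops_inv: "T \<in> ops \<Longrightarrow> ok x \<Longrightarrow> T (T x) = x"
  unfolding ops_def using cc[of x] cc[of "rev x"]
  by (auto simp: ok_def rev_compl)

lemma ops_comp: "T1 \<in> ops \<Longrightarrow> T2 \<in> ops \<Longrightarrow> ok z \<Longrightarrow> \<exists>T3\<in>ops. T2 (T1 z) = T3 z"
proof -
  assume a: "T1 \<in> ops" "T2 \<in> ops" "ok z"
  have c1: "compl_seq (compl_seq z) = z" using a(3) cc by (simp add: ok_def)
  have c2: "compl_seq (compl_seq (rev z)) = rev z" using a(3) cc by (simp add: ok_def)
  show ?thesis using a(1,2) unfolding ops_def
    by (elim insertE emptyE; simp only: comp_apply id_apply rev_compl rev_rev_ident c1 c2; simp)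
qed

lemma comm2: "T \<in> ops \<Longrightarrow> ok x \<Longrightarrow> \<exists>c. (c = 1 \<or> c = 2 * length x - 1) \<and>
   (\<forall>j. (S n ^^ j) (T x) = T ((S n ^^ (c * j)) x))"
proof -
  assume T: "T \<in> ops" and o: "ok x"
  have r: "\<forall>j. (S n ^^ j) (rev x) = rev ((S n ^^ ((2 * length x - 1) * j)) x)"
    using sigma_pow_rev[OF o] by blast
  have cr: "\<forall>j. (S n ^^ j) (compl_seq (rev x)) = compl_seq (rev ((S n ^^ ((2 * length x - 1) * j)) x))"
    using sigma_pow_rev[OF o] sigma_pow_compl[OF ok_rev[OF o]] by simp
  have c: "\<forall>j. (S n ^^ j) (compl_seq x) = compl_seq ((S n ^^ (1 * j)) x)"
    using sigma_pow_compl[OF o] by simp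
  show ?thesis using T unfolding ops_def
  proof (elim insertE)
    assume "T = id" then show ?thesis by (intro exI[of _ 1]) simp
  next
    assume "T = compl_seq" then show ?thesis using c by (intro exI[of _ 1]) simp
  next
    assume "T = rev" then show ?thesis using r by (intro exI[of _ "2 * length x - 1"]) simp
  next
    assume "T = compl_seq \<circ> rev" then show ?thesis using cr by (intro exI[of _ "2 * length x - 1"]) simp
  qed simp
qed

lemma pe_props: "proj_equiv n a b \<Longrightarrow> ok a \<Longrightarrow> ok b \<and> length b = length a"
proof -
  assume ab: "proj_equiv n a b" and o: "ok a"
  obtain k T1 where T1: "T1 \<in> ops" "b = T1 ((S n ^^ k) a)"
    using ab unfolding proj_equiv_def seq_equiv_ops by blast
  show ?thesis using T1 ok_ops[OF T1(1) conjunct1[OF ok_Spow[OF o]]] ok_Spow[OF o] by simp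
qed

lemma pe_trans: "proj_equiv n a b \<Longrightarrow> proj_equiv n b c \<Longrightarrow> ok a \<Longrightarrow> proj_equiv n a c"
proof -
  assume ab: "proj_equiv n a b" and bc: "proj_equiv n b c" and o: "ok a"
  obtain k T1 where T1: "T1 \<in> ops" "b = T1 ((S n ^^ k) a)"
    using ab unfolding proj_equiv_def seq_equiv_ops by blast
  obtain j T2 where T2: "T2 \<in> ops" "c = T2 ((S n ^^ j) b)"
    using bc unfolding proj_equiv_def seq_equiv_ops by blast
  define x where "x = (S n ^^ k) a"
  have ox: "ok x" using ok_Spow[OF o] x_def by simp
  obtain cf where cf: "\<forall>j. (S n ^^ j) (T1 x) = T1 ((S n ^^ (cf * j)) x)"
    using comm2[OF T1(1) ox, of n] by blast
  have oy: "ok ((S n ^^ (cf * j)) x)" using ok_Spow[OF ox] by simp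
  obtain T3 where T3: "T3 \<in> ops" "T2 (T1 ((S n ^^ (cf * j)) x)) = T3 ((S n ^^ (cf * j)) x)"
    using ops_comp[OF T1(1) T2(1) oy] by blast
  have e: "(S n ^^ (cf * j)) x = (S n ^^ (cf * j + k)) a" unfolding x_def by (simp add: funpow_add)
  have "c = T2 ((S n ^^ j) (T1 x))" using T2(2) T1(2) x_def by (simp only:)
  also have "\<dots> = T2 (T1 ((S n ^^ (cf * j)) x))" using cf[rule_format, of j] by (simp only:)
  also have "\<dots> = T3 ((S n ^^ (cf * j + k)) a)" using T3(2) e by (simp only:)
  finally have "c = T3 ((S n ^^ (cf * j + k)) a)" .
  then show ?thesis unfolding proj_equiv_def seq_equiv_ops using T3(1) by blast
qed

lemma pe_sym: "proj_equiv n a b \<Longrightarrow> ok a \<Longrightarrow> proj_equiv n b a"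
proof -
  assume ab: "proj_equiv n a b" and o: "ok a"
  obtain k T1 where T1: "T1 \<in> ops" "b = T1 ((S n ^^ k) a)"
    using ab unfolding proj_equiv_def seq_equiv_ops by blast
  define x where "x = (S n ^^ k) a"
  have ox: "ok x" "length x = length a" using ok_Spow[OF o] x_def by auto
  define N where "N = length a"
  have Np: "N > 0" using o by (simp add: ok_def N_def)
  obtain cf where cf: "cf = 1 \<or> cf = 2 * N - 1" "\<forall>j. (S n ^^ j) (T1 x) = T1 ((S n ^^ (cf * j)) x)"
  proof -
    from comm2[OF T1(1) ox(1), of n] obtain c where
      "(c = 1 \<or> c = 2 * length x - 1)" "\<forall>j. (S n ^^ j) (T1 x) = T1 ((S n ^^ (c * j)) x)"
      by (elim exE conjE)
    then show ?thesis using that ox(2) unfolding N_def by simp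
  qed
  define M where "M = 2 * N - 1"
  have SM: "Suc M = 2 * N" using Np M_def by simp
  have MK: "M * k + k = 2 * N * k" using SM[symmetric] by simp
  obtain j where j: "cf * j + k = 2 * N * k"
  proof (cases "cf = 1")
    case True
    then show ?thesis using that[of "M * k"] MK by (simp only: mult_1)
  next
    case False
    then have "cf = M" using cf M_def by simp
    then show ?thesis using that[of k] MK by (simp only:)
  qed
  have e: "(S n ^^ (cf * j)) x = (S n ^^ (cf * j + k)) a" unfolding x_def by (simp add: funpow_add)
  have "(S n ^^ j) b = (S n ^^ j) (T1 x)" using T1(2) x_def by (simp only:)
  also have "\<dots> = T1 ((S n ^^ (cf * j + k)) a)" using cf(2)[rule_format, of j] e by (simp only:)
  also have "\<dots> = T1 a" using j sigma_period_mult[OF o, where n=n and q=k] N_def by (simp only:)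
  finally have "a = T1 ((S n ^^ j) b)" using ops_inv[OF T1(1) o] by simp
  then show ?thesis unfolding proj_equiv_def seq_equiv_ops using T1(1) by blast
qed

lemma rep_ok: "ok b \<Longrightarrow> cyc_rep n b c \<Longrightarrow> ok c \<and> length c = length b"
  unfolding cyc_rep_def using pe_props by blast

lemma rep_cond: "ok c \<Longrightarrow> (if even n then hd c \<noteq> last c else hd c = last c) \<longleftrightarrow>
   (even n \<longleftrightarrow> even (length (length_vector c)))"
  using hd_last_lv[of c] by (auto simp: ok_def)

lemma ok_hd: "ok c \<Longrightarrow> hd c \<in> {1,2}"
  unfolding ok_def using hd_in_set[of c] by blast

lemma pe_refl_equiv: "seq_equiv c d \<Longrightarrow> proj_equiv n c d"
  unfolding proj_equiv_def by (intro exI[of _ 0]) simp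

lemma rot1: "ok b \<Longrightarrow> cyc_rep n b c \<Longrightarrow> \<exists>c'. cyc_rep n b c' \<and> length_vector c' = rotate1 (length_vector c)"
proof -
  assume ob: "ok b" and r: "cyc_rep n b c"
  have oc: "ok c" using rep_ok[OF ob r] by simp
  define v where "v = hd c"
  define M where "M = length_vector c"
  have v12: "v \<in> {1,2}" using ok_hd[OF oc] v_def by simp
  have Mne: "M \<noteq> []" using lv_nonempty[of c] oc M_def by (auto simp: ok_def)
  have M0: "0 \<notin> set M" using lv_pos M_def by simp
  have cM: "c = dec v M" using dec_lv oc v_def M_def by (simp add: ok_def)
  have par: "even n \<longleftrightarrow> even (length M)"
    using r rep_cond[OF oc, of n] M_def unfolding cyc_rep_def by simp
  obtain m M' where mM: "M = m # M'" using Mne by (cases M) auto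
  show ?thesis
  proof (cases "M' = []")
    case True
    then show ?thesis using r mM M_def by auto
  next
    case False
    define c' where "c' = (S n ^^ m) c"
    have c1: "c = replicate m v @ dec (3 - v) M'" using cM mM by simp
    have c2: "c' = dec (3 - v) M' @ map (gm n) (replicate m v)"
      unfolding c'_def c1 using sigma_pow_app[where n=n and x="replicate m v" and y="dec (3 - v) M'"]
      by simp
    have g: "gm n v = (if even (length M') then 3 - v else v)"
      using par mM v12 by (auto simp: gm_def)
    have d: "dec (3 - v) (M' @ [m]) = dec (3 - v) M' @ replicate m (if even (length M') then 3 - v else v)"
      using dec_app[of "3 - v" M' "[m]"] v12 by auto
    have c3: "c' = dec (3 - v) (M' @ [m])" using c2 d g by simp
    have lv: "length_vector c' = M' @ [m]" using c3 lv_dec M0 mM by simp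
    have pcc: "proj_equiv n c c'" unfolding proj_equiv_def seq_equiv_def c'_def by blast
    have pbc: "proj_equiv n b c'" using pe_trans[OF _ pcc ob] r unfolding cyc_rep_def by blast
    have oc': "ok c'" using pe_props[OF pbc ob] by simp
    have "(if even n then hd c' \<noteq> last c' else hd c' = last c')"
      using rep_cond[OF oc', of n] lv par mM by simp
    then show ?thesis using pbc lv mM M_def unfolding cyc_rep_def by auto
  qed
qed

lemma rotk: "ok b \<Longrightarrow> cyc_rep n b c \<Longrightarrow> \<exists>c'. cyc_rep n b c' \<and> length_vector c' = rotate k (length_vector c)"
proof (induction k)
  case 0
  then show ?case by auto
next
  case (Suc k)
  then obtain c' where "cyc_rep n b c'" "length_vector c' = rotate k (length_vector c)" by blast
  then show ?case using rot1[OF Suc.prems(1), of n c'] by (auto simp: rotate_Suc)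
qed

lemma revrep: "ok b \<Longrightarrow> cyc_rep n b c \<Longrightarrow> cyc_rep n b (rev c) \<and> length_vector (rev c) = rev (length_vector c)"
proof -
  assume ob: "ok b" and r: "cyc_rep n b c"
  have oc: "ok c" using rep_ok[OF ob r] by simp
  define v where "v = hd c"
  define M where "M = length_vector c"
  have v12: "v \<in> {1,2}" using ok_hd[OF oc] v_def by simp
  have M0: "0 \<notin> set M" using lv_pos M_def by simp
  have cM: "c = dec v M" using dec_lv oc v_def M_def by (simp add: ok_def)
  have "rev c = dec (if odd (length M) then v else 3 - v) (rev M)"
    using cM dec_rev[OF M0, of v] v12 by auto
  then have lv: "length_vector (rev c) = rev M" using lv_dec M0 by simp
  have pcc: "proj_equiv n c (rev c)" by (rule pe_refl_equiv) (simp add: seq_equiv_def)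
  have pbc: "proj_equiv n b (rev c)" using pe_trans[OF _ pcc ob] r unfolding cyc_rep_def by blast
  have cne: "c \<noteq> []" using oc by (simp add: ok_def)
  have "(if even n then hd (rev c) \<noteq> last (rev c) else hd (rev c) = last (rev c))"
    using r cne unfolding cyc_rep_def by (auto simp: hd_rev last_rev)
  then show ?thesis using pbc lv M_def unfolding cyc_rep_def by simp
qed

lemma orbit_move: "ok b \<Longrightarrow> cyc_rep n b c \<Longrightarrow> L \<in> dihedral_orbit (length_vector c) \<Longrightarrow>
   \<exists>c'. cyc_rep n b c' \<and> length_vector c' = L"
proof -
  assume ob: "ok b" and r: "cyc_rep n b c" and L: "L \<in> dihedral_orbit (length_vector c)"
  then obtain k where k: "L = rotate k (length_vector c) \<or> L = rev (rotate k (length_vector c))"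
    unfolding dihedral_orbit_def by blast
  obtain c' where c': "cyc_rep n b c'" "length_vector c' = rotate k (length_vector c)"
    using rotk[OF ob r] by blast
  show ?thesis using k
  proof
    assume "L = rotate k (length_vector c)" then show ?thesis using c' by blast
  next
    assume "L = rev (rotate k (length_vector c))"
    then show ?thesis using revrep[OF ob c'(1)] c'(2) by metis
  qed
qed

lemma const_of_adj: "\<forall>i. Suc i < length a \<longrightarrow> a ! i = a ! Suc i \<Longrightarrow> a \<noteq> [] \<Longrightarrow>
   a = replicate (length a) (hd a)"
proof -
  assume h: "\<forall>i. Suc i < length a \<longrightarrow> a ! i = a ! Suc i" and ne: "a \<noteq> []"
  have all0: "i < length a \<longrightarrow> a ! i = a ! 0" for i
  proof (induction i)
    case (Suc i)
    show ?case
    proof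
      assume l: "Suc i < length a"
      then have e1: "a ! i = a ! Suc i" using h by blast
      have e2: "a ! i = a ! 0" using Suc.IH l by linarith
      show "a ! Suc i = a ! 0" using e1 e2 by (rule subst)
    qed
  qed simp
  show ?thesis
  proof (rule nth_equalityI)
    show "length a = length (replicate (length a) (hd a))" by simp
    fix i assume "i < length a"
    then show "a ! i = replicate (length a) (hd a) ! i"
      using all0[of i] by (simp only: nth_replicate hd_conv_nth[OF ne] simp_thms)
  qed
qed

lemma exists_rep: "ok a \<Longrightarrow> odd n \<or> a \<noteq> replicate (length a) (hd a) \<Longrightarrow> \<exists>a'. cyc_rep n a a'"
proof -
  assume oa: "ok a" and h: "odd n \<or> a \<noteq> replicate (length a) (hd a)"
  have ne: "a \<noteq> []" using oa by (simp add: ok_def)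
  show ?thesis
  proof (cases "\<exists>i. Suc i < length a \<and> a ! i \<noteq> a ! Suc i")
    case True
    then obtain i where i: "Suc i < length a" "a ! i \<noteq> a ! Suc i" by blast
    define c where "c = (S n ^^ Suc i) a"
    have lt: "length (take (Suc i) a) = Suc i" using i by simp
    have "c = (S n ^^ length (take (Suc i) a)) (take (Suc i) a @ drop (Suc i) a)"
      unfolding c_def lt by simp
    also have "\<dots> = drop (Suc i) a @ map (gm n) (take (Suc i) a)" by (rule sigma_pow_app)
    finally have c: "c = drop (Suc i) a @ map (gm n) (take (Suc i) a)" .
    have hdc: "hd c = a ! Suc i" using c i by (simp add: hd_drop_conv_nth)
    have tk: "take (Suc i) a = take i a @ [a ! i]" using i by (simp add: take_Suc_conv_app_nth)
    have lc: "last c = gm n (a ! i)" using c tk by simp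
    have "a ! i \<in> set a" "a ! Suc i \<in> set a" using i(1) by auto
    then have "a ! i \<in> {1,2}" "a ! Suc i \<in> {1,2}" using oa unfolding ok_def by blast+
    then have cond: "(if even n then hd c \<noteq> last c else hd c = last c)"
      using hdc lc i(2) by (auto simp: gm_def)
    have "proj_equiv n a c" unfolding proj_equiv_def seq_equiv_def c_def by blast
    then show ?thesis using cond unfolding cyc_rep_def by blast
  next
    case False
    then have aa: "a = replicate (length a) (hd a)" using const_of_adj ne by auto
    then have on: "odd n" using h by auto
    have "hd a \<in> set a" "last a \<in> set a" using ne by auto
    then have "hd a = last a" using aa by (metis in_set_replicate)
    moreover have "proj_equiv n a a" by (rule pe_refl_equiv) (simp add: seq_equiv_def)
    ultimately show ?thesis using on unfolding cyc_rep_def by auto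
  qed
qed

lemma rot_single: "rotate k [x] = [x]"
  by (induction k) (simp_all add: rotate_Suc)

lemma lv_in_clv: "cyc_rep n a a' \<Longrightarrow> length_vector a' \<in> cyclic_length_vector n a"
proof -
  assume r: "cyc_rep n a a'"
  have ex: "\<exists>x. cyc_rep n a x" using r by blast
  have mem: "length_vector a' \<in> dihedral_orbit (length_vector a')"
    unfolding dihedral_orbit_def by (auto intro!: exI[of _ 0])
  have "cyclic_length_vector n a = \<Union>{dihedral_orbit (length_vector a') | a'. cyc_rep n a a'}"
    unfolding cyclic_length_vector_def using ex by (simp only: if_True)
  then show ?thesis using mem r by blast
qed

lemma clv_rep: "cyc_rep n b b0 \<Longrightarrow> L \<in> cyclic_length_vector n b \<Longrightarrow>
   \<exists>b'. cyc_rep n b b' \<and> L \<in> dihedral_orbit (length_vector b')"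
proof -
  assume r: "cyc_rep n b b0" and L: "L \<in> cyclic_length_vector n b"
  have ex: "\<exists>x. cyc_rep n b x" using r by blast
  have "cyclic_length_vector n b = \<Union>{dihedral_orbit (length_vector a') | a'. cyc_rep n b a'}"
    unfolding cyclic_length_vector_def using ex by (simp only: if_True)
  then show ?thesis using L by blast
qed

lemma clv_norep: "\<not> (\<exists>b'. cyc_rep n b b') \<Longrightarrow> L \<in> cyclic_length_vector n b \<Longrightarrow> L = [3 * n]"
proof -
  assume nr: "\<not> (\<exists>b'. cyc_rep n b b')" and L: "L \<in> cyclic_length_vector n b"
  have "cyclic_length_vector n b = dihedral_orbit [3 * n]"
    unfolding cyclic_length_vector_def using nr by (simp only: if_False)
  then show ?thesis using L unfolding dihedral_orbit_def by (auto simp: rot_single)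
qed

lemma half: "ok a \<Longrightarrow> ok b \<Longrightarrow> cyc_rep n a a' \<Longrightarrow> \<not> (\<exists>b'. cyc_rep n b b') \<Longrightarrow>
  cyclic_length_vector n a = cyclic_length_vector n b \<Longrightarrow> False"
proof -
  assume oa: "ok a" and ob: "ok b" and r: "cyc_rep n a a'" and nr: "\<not> (\<exists>b'. cyc_rep n b b')"
    and e: "cyclic_length_vector n a = cyclic_length_vector n b"
  have "length_vector a' = [3 * n]" using lv_in_clv[OF r] e clv_norep[OF nr] by simp
  moreover have oa': "ok a'" using rep_ok[OF oa r] by simp
  ultimately have "odd n" using rep_cond[OF oa', of n] r unfolding cyc_rep_def by auto
  then show False using exists_rep[OF ob] nr by blast
qed

lemma dec_cases: "ok x \<Longrightarrow> ok y \<Longrightarrow> length_vector x = length_vector y \<Longrightarrow> seq_equiv x y"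
proof -
  assume ox: "ok x" and oy: "ok y" and e: "length_vector x = length_vector y"
  have x: "x = dec (hd x) (length_vector x)" using dec_lv ox by (simp add: ok_def)
  have y: "y = dec (hd y) (length_vector x)" using dec_lv oy e by (simp add: ok_def)
  have hx: "hd x \<in> {1,2}" and hy: "hd y \<in> {1,2}" using ok_hd ox oy by auto
  show ?thesis
  proof (cases "hd y = hd x")
    case True then show ?thesis using x y by (simp add: seq_equiv_def)
  next
    case False
    then have "hd y = 3 - hd x" using hx hy by auto
    then have "y = compl_seq x" using x y dec_compl[of "hd x" "length_vector x"] hx by auto
    then show ?thesis by (simp add: seq_equiv_def)
  qed
qed

theorem mainTheorem4:
  fixes n :: nat and a b :: "nat list"
  assumes "n \<ge> 1"
    and "length a = 3 * n" and "set a \<subseteq> {1, 2}"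
    and "length b = 3 * n" and "set b \<subseteq> {1, 2}"
    and "cyclic_length_vector n a = cyclic_length_vector n b"
  shows "proj_equiv n a b"
proof -
  have oa: "ok a" and ob: "ok b" using assms unfolding ok_def by auto
  note e = assms(6)
  show ?thesis
  proof (cases "\<exists>a'. cyc_rep n a a'")
    case True
    then obtain a' where ra: "cyc_rep n a a'" by blast
    have "\<exists>b'. cyc_rep n b b'" using half[OF oa ob ra _ e] by blast
    then obtain b0 where rb0: "cyc_rep n b b0" by blast
    obtain b' where rb': "cyc_rep n b b'" "length_vector a' \<in> dihedral_orbit (length_vector b')"
    proof -
      have "length_vector a' \<in> cyclic_length_vector n b" using lv_in_clv[OF ra] e by simp
      then show ?thesis using clv_rep[OF rb0] that by blast
    qed
    obtain b'' where rb'': "cyc_rep n b b''" "length_vector b'' = length_vector a'"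
      using orbit_move[OF ob rb'] by blast
    have oa': "ok a'" using rep_ok[OF oa ra] by simp
    have ob'': "ok b''" using rep_ok[OF ob rb''(1)] by simp
    have p1: "proj_equiv n a' b''"
      by (rule pe_refl_equiv) (rule dec_cases[OF oa' ob''], simp add: rb''(2))
    have p2: "proj_equiv n a b''" using pe_trans[OF _ p1 oa] ra unfolding cyc_rep_def by blast
    have p3: "proj_equiv n b'' b" using pe_sym[OF _ ob] rb''(1) unfolding cyc_rep_def by blast
    show ?thesis using pe_trans[OF p2 p3 oa] .
  next
    case False
    have nb: "\<not> (\<exists>b'. cyc_rep n b b')" using half[OF ob oa _ False e[symmetric]] by blast
    have ca: "a = replicate (3 * n) (hd a)" and en: "even n"
      using exists_rep[OF oa] False assms(2) by auto
    have cb: "b = replicate (3 * n) (hd b)"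
      using exists_rep[OF ob] nb assms(4) by auto
    have hx: "hd a \<in> {1,2}" and hy: "hd b \<in> {1,2}" using ok_hd oa ob by auto
    have "b = a \<or> b = compl_seq a"
    proof (cases "hd b = hd a")
      case True then show ?thesis using ca cb by simp
    next
      case False
      then have "hd b = 3 - hd a" using hx hy by auto
      moreover have "compl_seq (replicate (3 * n) (hd a)) = replicate (3 * n) (3 - hd a)"
        by (simp add: compl_seq_def)
      ultimately have "b = compl_seq a" using ca[symmetric] cb by simp
      then show ?thesis by simp
    qed
    then show ?thesis by (intro pe_refl_equiv) (auto simp: seq_equiv_def)
  qed
qed

end
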